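(* Let $Z$ be a separable metric space on which a group $G$ acts by isometries such that some $G$-orbit is dense in $Z$. If there exists a finite, nonzero, $G$-invariant Borel measure $\mu$ on $Z$, then $Z$ is totally bounded. *)

theory Defs
  imports "HOL-Probability.Probability" "HOL-Algebra.Group_Action"
begin

end

theory Submission
  imports Defs
begin

theorem mainTheorem6:
  fixes G :: "('g, 'b) monoid_scheme" (structure)
    and \<phi> :: "'g \<Rightarrow> 'z::metric_space \<Rightarrow> 'z"
    and \<mu> :: "'z measure"
  assumes separable: "\<exists>D :: 'z set. countable D \<and> closure D = UNIV"
    and action: "group_action G UNIV \<phi>"
    and isometries: "\<forall>g \<in> carrier G. \<forall>x y. dist (\<phi> g x) (\<phi> g y) = dist x y"
    and dense_orbit: "\<exists>z. closure (orbit G \<phi> z) = UNIV"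
    and borel: "sets \<mu> = sets borel"
    and finite: "emeasure \<mu> UNIV < \<infinity>"
    and nonzero: "emeasure \<mu> UNIV \<noteq> 0"
    and invariant: "\<forall>g \<in> carrier G. \<forall>A \<in> sets borel. emeasure \<mu> (\<phi> g -` A) = emeasure \<mu> A"
  shows "totally_bounded (UNIV :: 'z set)"
proof (rule ccontr)
  interpret A: group_action G UNIV \<phi> by (rule action)
  interpret H: group_hom G "BijGroup UNIV" \<phi> by (rule A.group_hom)
  assume "\<not> totally_bounded (UNIV :: 'z set)"
  then obtain e :: real where e: "e > 0"
    and nocov: "\<And>F :: 'z set. finite F \<Longrightarrow> \<exists>x. \<forall>f\<in>F. dist f x \<ge> e"
  proof -
    from \<open>\<not> totally_bounded (UNIV :: 'z set)\<close> obtain e :: real where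
      e0: "e > 0" and nc: "\<forall>k. \<not> (finite k \<and> UNIV \<subseteq> (\<Union>x\<in>k. {y::'z. dist x y < e}))"
      unfolding totally_bounded_metric not_all not_imp not_ex by (elim exE conjE) (rule that; assumption)
    have "\<exists>x. \<forall>f\<in>F. dist f x \<ge> e" if fin: "finite F" for F :: "'z set"
    proof -
      have "\<not> UNIV \<subseteq> (\<Union>x\<in>F. {y. dist x y < e})" using spec[OF nc, of F] fin by simp
      then obtain x where "x \<notin> (\<Union>f\<in>F. {y. dist f y < e})" by (meson subsetI)
      then have "\<forall>f\<in>F. dist f x \<ge> e" by (simp add: not_less)
      then show ?thesis by (rule exI)
    qed
    then show thesis by (intro that[OF e0]) assumption
  qed
  have sp: "space \<mu> = UNIV" using sets_eq_imp_space_eq[OF borel] by simp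
  interpret M: finite_measure \<mu>
    by (rule finite_measureI) (use finite sp in auto)
  have ballm: "ball x r \<in> sets \<mu>" for x r using borel by simp
  obtain D :: "'z set" where D: "countable D" "closure D = UNIV" using separable by blast
  obtain z where z: "closure (orbit G \<phi> z) = UNIV" using dense_orbit by blast
  have orb: "\<exists>g\<in>carrier G. dist x (\<phi> g z) < r" if rpos: "r > 0" for x r
  proof -
    have "x \<in> closure (orbit G \<phi> z)" using z by simp
    then obtain y where "y \<in> orbit G \<phi> z" "dist y x < r" using closure_approachable rpos by blast
    then show ?thesis unfolding orbit_def by (auto simp: dist_commute)
  qed
  have "\<exists>d\<in>D. emeasure \<mu> (ball d (e/8)) \<noteq> 0"
  proof (rule ccontr)
    assume "\<not> ?thesis"
    then have "(\<Union>d\<in>D. ball d (e/8)) \<in> null_sets \<mu>"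
      using D(1) ballm by (intro null_sets_UN') (auto simp: null_sets_def)
    moreover have "(\<Union>d\<in>D. ball d (e/8)) = UNIV"
    proof -
      have "\<exists>d\<in>D. dist d x < e/8" for x
        using closure_approachable[of x D] D(2) e by (metis UNIV_I divide_pos_pos zero_less_numeral)
      then show ?thesis by (auto simp: dist_commute)
    qed
    ultimately show False using nonzero by (simp add: null_sets_def)
  qed
  then obtain d where d: "d \<in> D" "emeasure \<mu> (ball d (e/8)) \<noteq> 0" by blast
  obtain g where g: "g \<in> carrier G" "dist d (\<phi> g z) < e/8" using orb[of "e/8" d] e by auto
  define c where "c = measure \<mu> (ball (\<phi> g z) (e/4))"
  have "ball d (e/8) \<subseteq> ball (\<phi> g z) (e/4)"
  proof
    fix x assume "x \<in> ball d (e/8)"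
    then have "dist d x < e/8" by simp
    then have "dist (\<phi> g z) x < e/4"
      using g(2) dist_triangle[of "\<phi> g z" x d] by (simp add: dist_commute)
    then show "x \<in> ball (\<phi> g z) (e/4)" by simp
  qed
  then have "emeasure \<mu> (ball (\<phi> g z) (e/4)) \<noteq> 0"
    using d(2) emeasure_mono[OF _ ballm] by (metis le_zero_eq)
  then have cpos: "c > 0" unfolding c_def
    by (simp add: M.emeasure_eq_measure zero_less_measure_iff)
  have cball: "measure \<mu> (ball (\<phi> h z) (e/4)) = c" if h: "h \<in> carrier G" for h
  proof -
    define k where "k = g \<otimes> inv h"
    have k: "k \<in> carrier G" using h g unfolding k_def by simp
    have "\<phi> k (\<phi> h z) = \<phi> (k \<otimes> h) z" using A.composition_rule k h by simp
    also have "k \<otimes> h = g" unfolding k_def using h g by (simp add: H.G.m_assoc)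
    finally have kh: "\<phi> k (\<phi> h z) = \<phi> g z" .
    have iso: "dist (\<phi> k a) (\<phi> k b) = dist a b" for a b using isometries k by blast
    have pre: "\<phi> k -` ball (\<phi> g z) (e/4) = ball (\<phi> h z) (e/4)"
    proof (rule Set.set_eqI)
      fix x
      have "x \<in> \<phi> k -` ball (\<phi> g z) (e/4) \<longleftrightarrow> dist (\<phi> k (\<phi> h z)) (\<phi> k x) < e/4"
        by (simp add: kh)
      also have "\<dots> \<longleftrightarrow> x \<in> ball (\<phi> h z) (e/4)" by (simp add: iso)
      finally show "x \<in> \<phi> k -` ball (\<phi> g z) (e/4) \<longleftrightarrow> x \<in> ball (\<phi> h z) (e/4)" .
    qed
    have "ball (\<phi> g z) (e/4) \<in> sets borel" by simp
    then have "emeasure \<mu> (\<phi> k -` ball (\<phi> g z) (e/4)) = emeasure \<mu> (ball (\<phi> g z) (e/4))"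
      using invariant k by blast
    with pre show ?thesis unfolding c_def measure_def by simp
  qed
  have sep: "\<exists>F. finite F \<and> card F = n \<and> F \<subseteq> orbit G \<phi> z \<and>
       (\<forall>x\<in>F. \<forall>y\<in>F. x \<noteq> y \<longrightarrow> dist x y \<ge> e/2)" for n
  proof (induction n)
    case 0 then show ?case by auto
  next
    case (Suc n)
    from Suc.IH obtain F where F: "finite F" "card F = n" "F \<subseteq> orbit G \<phi> z"
      "\<forall>x\<in>F. \<forall>y\<in>F. x \<noteq> y \<longrightarrow> dist x y \<ge> e/2" by (elim exE conjE)
    from nocov[OF F(1)] obtain x where x: "\<forall>f\<in>F. dist f x \<ge> e" by (elim exE)
    have "e/2 > 0" using e by simp
    from orb[OF this, of x] obtain h where h: "h \<in> carrier G" "dist x (\<phi> h z) < e/2" by (elim bexE)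
    have far: "dist f (\<phi> h z) \<ge> e/2" if "f \<in> F" for f
    proof -
      have "e \<le> dist f x" using x that by blast
      moreover have "dist f x \<le> dist f (\<phi> h z) + dist x (\<phi> h z)"
        using dist_triangle[of f x "\<phi> h z"] by (simp add: dist_commute)
      ultimately show ?thesis using h(2) by linarith
    qed
    have notin: "\<phi> h z \<notin> F" proof
      assume "\<phi> h z \<in> F"
      from far[OF this] e show False by simp
    qed
    have yo: "\<phi> h z \<in> orbit G \<phi> z" unfolding orbit_def using h(1) by blast
    have pw: "\<forall>a\<in>insert (\<phi> h z) F. \<forall>b\<in>insert (\<phi> h z) F. a \<noteq> b \<longrightarrow> dist a b \<ge> e/2"
    proof (intro ballI impI)
      fix a b assume a: "a \<in> insert (\<phi> h z) F" and b: "b \<in> insert (\<phi> h z) F" and ab: "a \<noteq> b"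
      show "dist a b \<ge> e/2"
      proof (cases "a = \<phi> h z")
        case True
        then have "b \<in> F" using b ab by simp
        then show ?thesis using far True by (simp add: dist_commute)
      next
        case False
        then have aF: "a \<in> F" using a by simp
        show ?thesis
        proof (cases "b = \<phi> h z")
          case True then show ?thesis using far aF by simp
        next
          case False then have "b \<in> F" using b by simp
          then show ?thesis using F(4) aF ab by blast
        qed
      qed
    qed
    have "finite (insert (\<phi> h z) F) \<and> card (insert (\<phi> h z) F) = Suc n \<and>
      insert (\<phi> h z) F \<subseteq> orbit G \<phi> z \<and>
      (\<forall>a\<in>insert (\<phi> h z) F. \<forall>b\<in>insert (\<phi> h z) F. a \<noteq> b \<longrightarrow> dist a b \<ge> e/2)"
      using F(1,2,3) notin yo pw by simp
    then show ?case by (rule exI)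
  qed
  from reals_Archimedean2[of "measure \<mu> UNIV / c"]
  obtain n :: nat where n: "real n > measure \<mu> UNIV / c" by (elim exE)
  from sep[of n] obtain F where F: "finite F" "card F = n" "F \<subseteq> orbit G \<phi> z"
      "\<forall>x\<in>F. \<forall>y\<in>F. x \<noteq> y \<longrightarrow> dist x y \<ge> e/2" by (elim exE conjE)
  have disj: "disjoint_family_on (\<lambda>x. ball x (e/4)) F"
  proof (unfold disjoint_family_on_def, intro ballI impI)
    fix x y assume "x \<in> F" "y \<in> F" "x \<noteq> y"
    then have "dist x y \<ge> e/2" using F(4) by blast
    show "ball x (e/4) \<inter> ball y (e/4) = {}"
    proof (rule ccontr)
      assume "ball x (e/4) \<inter> ball y (e/4) \<noteq> {}"
      then obtain w where "dist x w < e/4" "dist y w < e/4" by auto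
      then have "dist x y < e/4 + e/4"
        using dist_triangle_less_add[of x w "e/4" y "e/4"] by (simp add: dist_commute)
      then show False using \<open>dist x y \<ge> e/2\<close> by simp
    qed
  qed
  have "measure \<mu> (\<Union>x\<in>F. ball x (e/4)) = (\<Sum>x\<in>F. measure \<mu> (ball x (e/4)))"
    using F(1) disj ballm by (intro M.finite_measure_finite_Union) auto
  also have "\<dots> = (\<Sum>x\<in>F. c)"
    using F(3) cball by (intro sum.cong) (auto simp: orbit_def)
  also have "\<dots> = n * c" using F(2) by simp
  finally have "n * c \<le> measure \<mu> UNIV"
    by (metis M.finite_measure_mono sets.top sp subset_UNIV)
  then show False using n cpos by (simp add: pos_divide_less_eq mult.commute)
qed

end
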